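(* Let $N\ge 1$ and let $A_N^*:=\bigcup_{j=1}^N\bigcup_{B\in L_j(\Gamma)}B$ be the union of all lower sets in $\Gamma=\mathbb N_0^s$ of cardinality at most $N$. Then $A_N^*$ is a monomial degree reducing universal interpolation set of order $N$, and it is minimal: every monomial degree reducing universal interpolation set of order $N$ contains $A_N^*$; in particular no proper subset of $A_N^*$ is a monomial degree reducing universal interpolation set of order $N$.
   Context: $\Pi=\mathbb C[x_1,\dots,x_s]$, $\deg$ is total degree with $\deg 0<0$. For $A\subset\Gamma$, $\Pi_A$ is the span of the monomials $x^\alpha$, $\alpha\in A$. A subspace $\mathcal P\subseteq\Pi$ is a degree reducing universal interpolation space of order $N$ if for every finite $X\subset\mathbb C^s$ with $\#X\le N$ and every $q\in\Pi$ there is $p\in\mathcal P$ with $p|_X=q|_X$ and $\deg p\le\deg q$. A set $A\subset\Gamma$ is a monomial degree reducing universal interpolation set of order $N$ if $\Pi_A$ is a degree reducing universal interpolation space of order $N$. For $\alpha,\beta\in\Gamma$, $\alpha\le\beta$ means $\alpha_j\le\beta_j$ for all $j$; $B\subset\Gamma$ is a lower set if $\alpha\in B$ and $\beta\le\alpha$ imply $\beta\in B$; $L_j(\Gamma)$ denotes the set of lower sets of cardinality $j$. *)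

theory Defs
  imports Complex_Main
begin

text \<open>Variables are indexed by a finite type 'n (so s = CARD('n)); multi-indices in
  Gamma = N_0^s are functions 'n => nat; the order on functions is pointwise, i.e.
  the componentwise order of the paper. A polynomial in C[x_1..x_s] is its finitely
  supported coefficient function.\<close>

type_synonym 'n mpoly = "('n \<Rightarrow> nat) \<Rightarrow> complex"

definition supp :: "'n mpoly \<Rightarrow> ('n \<Rightarrow> nat) set" where
  "supp p = {\<alpha>. p \<alpha> \<noteq> 0}"

definition polys :: "'n mpoly set" where
  "polys = {p. finite (supp p)}"

definition mdeg :: "('n::finite \<Rightarrow> nat) \<Rightarrow> nat" where
  "mdeg \<alpha> = (\<Sum>j\<in>UNIV. \<alpha> j)"

definition tdeg :: "'n::finite mpoly \<Rightarrow> int" where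
  "tdeg p = (if supp p = {} then -1 else Max ((\<lambda>\<alpha>. int (mdeg \<alpha>)) ` supp p))"

definition peval :: "'n::finite mpoly \<Rightarrow> ('n \<Rightarrow> complex) \<Rightarrow> complex" where
  "peval p x = (\<Sum>\<alpha>\<in>supp p. p \<alpha> * (\<Prod>j\<in>UNIV. x j ^ \<alpha> j))"

definition Pi_span :: "('n \<Rightarrow> nat) set \<Rightarrow> 'n mpoly set" where
  "Pi_span A = {p \<in> polys. supp p \<subseteq> A}"

definition dr_uis :: "'n::finite mpoly set \<Rightarrow> nat \<Rightarrow> bool" where
  "dr_uis P N \<longleftrightarrow> P \<subseteq> polys \<and>
     (\<forall>X :: ('n \<Rightarrow> complex) set. finite X \<and> card X \<le> N \<longrightarrow>
       (\<forall>q\<in>polys. \<exists>p\<in>P. (\<forall>x\<in>X. peval p x = peval q x) \<and> tdeg p \<le> tdeg q))"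

definition mdr_uis_set :: "('n::finite \<Rightarrow> nat) set \<Rightarrow> nat \<Rightarrow> bool" where
  "mdr_uis_set A N \<longleftrightarrow> dr_uis (Pi_span A) N"

definition lower_set :: "('n \<Rightarrow> nat) set \<Rightarrow> bool" where
  "lower_set B \<longleftrightarrow> (\<forall>\<alpha>\<in>B. \<forall>\<beta>. \<beta> \<le> \<alpha> \<longrightarrow> \<beta> \<in> B)"

definition lower_sets_card :: "nat \<Rightarrow> ('n \<Rightarrow> nat) set set" where
  "lower_sets_card j = {B. lower_set B \<and> finite B \<and> card B = j}"

definition Astar :: "nat \<Rightarrow> ('n \<Rightarrow> nat) set" where
  "Astar N = (\<Union>j\<in>{1..N}. \<Union>(lower_sets_card j))"

end

theory Submission
  imports Defs "HOL-Library.Function_Algebras" "HOL-Library.FuncSet" "HOL-Analysis.Complex_Transcendental"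
begin

definition mon :: "('n::finite \<Rightarrow> nat) \<Rightarrow> ('n \<Rightarrow> complex) \<Rightarrow> complex" where
  "mon a x = (\<Prod>j\<in>UNIV. x j ^ a j)"

lemma peval_superset:
  assumes "finite S" "supp p \<subseteq> S"
  shows "peval p x = (\<Sum>a\<in>S. p a * mon a x)"
  unfolding peval_def mon_def
  by (rule sum.mono_neutral_left) (use assms in \<open>auto simp: supp_def\<close>)

lemma rou_sum:
  fixes a g :: nat
  assumes "g \<le> a"
  shows "(\<Sum>b\<in>{..a}. exp (2 * of_real pi * \<i> / of_nat (Suc a)) ^ (b * (g + 1)))
          = (if g = a then of_nat (Suc a) else 0)"
proof -
  define w where "w = exp (2 * of_real pi * \<i> / of_nat (Suc a))"
  define z where "z = w ^ (g + 1)"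
  have wn: "w ^ Suc a = 1"
    unfolding w_def exp_of_nat_mult[symmetric] using exp_two_pi_i by (simp add: mult.assoc)
  have eq: "(\<Sum>b\<in>{..a}. w ^ (b * (g + 1))) = (\<Sum>b<Suc a. z ^ b)"
    unfolding z_def lessThan_Suc_atMost by (intro sum.cong refl) (metis power_mult mult.commute)
  show ?thesis
  proof (cases "g = a")
    case True
    then have "z = 1" using wn by (simp add: z_def)
    then show ?thesis using eq True by (simp add: w_def)
  next
    case False
    have zn: "z ^ Suc a = 1" unfolding z_def
      by (metis power_mult mult.commute wn power_one)
    have "z \<noteq> 1"
    proof
      assume "z = 1"
      then have "exp (of_nat (g+1) * (2 * of_real pi * \<i> / of_nat (Suc a))) = 1"
        unfolding z_def w_def exp_of_nat_mult by simp
      then obtain n :: int where n: "Im (of_nat (g+1) * (2 * of_real pi * \<i> / of_nat (Suc a))) = of_int (2*n) * pi"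
        unfolding exp_eq_1 by blast
      have "Im (of_nat (g+1) * (2 * of_real pi * \<i> / of_nat (Suc a))) = 2 * pi * real (g+1) / real (Suc a)"
      proof -
        have "of_nat (g+1) * (2 * of_real pi * \<i> / of_nat (Suc a)) = \<i> * complex_of_real (2 * pi * real (g+1) / real (Suc a))"
          by (simp add: field_simps)
        then show ?thesis by simp
      qed
      with n have "2 * pi * real (g+1) / real (Suc a) = 2 * pi * real_of_int n" by (simp add: mult_ac)
      then have "real (g+1) / real (Suc a) = real_of_int n"
        by (metis (no_types) mult_cancel_left pi_neq_zero times_divide_eq_right zero_neq_numeral mult_eq_0_iff)
      then have "real (g+1) = real (Suc a) * real_of_int n"
        by (simp add: divide_eq_eq del: of_nat_Suc)
      then have "int (g+1) = int (Suc a) * n" by (metis of_int_eq_iff of_int_mult of_int_of_nat_eq)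
      moreover have "0 < int (g+1)" "int (g+1) < int (Suc a)" using assms False by auto
      ultimately show False
        by (metis mult_le_cancel_left1 order_less_irrefl order_le_less_trans zero_less_mult_pos nless_le
                  int_one_le_iff_zero_less linorder_not_less mult.commute)
    qed
    have s: "(\<Sum>b<Suc a. z ^ b) = 0"
    proof -
      have "(\<Sum>b<Suc a. z ^ b) = (1 - z ^ Suc a) / (1 - z)"
        by (subst sum_gp_strict) (use \<open>z \<noteq> 1\<close> in simp)
      then show ?thesis using zn by simp
    qed
    show ?thesis unfolding w_def[symmetric] using eq s False by simp
  qed
qed

lemma pow_aux: "(w::complex) ^ b * (w ^ b) ^ g = w ^ (b * (g + 1))"
  by (simp add: power_mult[symmetric] power_add[symmetric] distrib_left)

lemma sum_over_D:
  fixes \<alpha> :: "'n::finite \<Rightarrow> nat" and \<omega> :: "'n \<Rightarrow> complex"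
  assumes "finite (supp r)"
  shows "(\<Sum>\<beta>\<in>PiE UNIV (\<lambda>j. {..\<alpha> j}). (\<Prod>j\<in>UNIV. \<omega> j ^ \<beta> j) * peval r (\<lambda>j. \<omega> j ^ \<beta> j))
       = (\<Sum>\<gamma>\<in>supp r. r \<gamma> * (\<Prod>j\<in>UNIV. \<Sum>b\<in>{..\<alpha> j}. \<omega> j ^ (b * (\<gamma> j + 1))))"
proof -
  have "(\<Sum>\<beta>\<in>PiE UNIV (\<lambda>j. {..\<alpha> j}). (\<Prod>j\<in>UNIV. \<omega> j ^ \<beta> j) * peval r (\<lambda>j. \<omega> j ^ \<beta> j))
     = (\<Sum>\<beta>\<in>PiE UNIV (\<lambda>j. {..\<alpha> j}). \<Sum>\<gamma>\<in>supp r. r \<gamma> * (\<Prod>j\<in>UNIV. \<omega> j ^ (\<beta> j * (\<gamma> j + 1))))"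
  proof (intro sum.cong refl)
    fix \<beta> :: "'n \<Rightarrow> nat"
    have H: "\<And>\<gamma>. (\<Prod>j\<in>UNIV. \<omega> j ^ \<beta> j) * (\<Prod>j\<in>UNIV. (\<omega> j ^ \<beta> j) ^ \<gamma> j)
             = (\<Prod>j\<in>UNIV. \<omega> j ^ (\<beta> j * (\<gamma> j + 1)))"
      by (simp add: prod.distrib[symmetric] pow_aux)
    show "(\<Prod>j\<in>UNIV. \<omega> j ^ \<beta> j) * peval r (\<lambda>j. \<omega> j ^ \<beta> j)
       = (\<Sum>\<gamma>\<in>supp r. r \<gamma> * (\<Prod>j\<in>UNIV. \<omega> j ^ (\<beta> j * (\<gamma> j + 1))))"
      unfolding peval_def sum_distrib_left
      proof (intro sum.cong refl)
        fix \<gamma> show "(\<Prod>j\<in>UNIV. \<omega> j ^ \<beta> j) * (r \<gamma> * (\<Prod>j\<in>UNIV. (\<omega> j ^ \<beta> j) ^ \<gamma> j)) =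
             r \<gamma> * (\<Prod>j\<in>UNIV. \<omega> j ^ (\<beta> j * (\<gamma> j + 1)))"
          using H[of \<gamma>] by (simp only: mult.left_commute[of _ "r \<gamma>"])
      qed
  qed
  also have "\<dots> = (\<Sum>\<gamma>\<in>supp r. r \<gamma> * (\<Sum>\<beta>\<in>PiE UNIV (\<lambda>j. {..\<alpha> j}). \<Prod>j\<in>UNIV. \<omega> j ^ (\<beta> j * (\<gamma> j + 1))))"
    by (subst sum.swap) (simp only: sum_distrib_left)
  also have "\<dots> = (\<Sum>\<gamma>\<in>supp r. r \<gamma> * (\<Prod>j\<in>UNIV. \<Sum>b\<in>{..\<alpha> j}. \<omega> j ^ (b * (\<gamma> j + 1))))"
    by (intro sum.cong refl arg_cong2[where f="(*)"] prod_sum_PiE[symmetric]) auto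
  finally show ?thesis .
qed

lemma mdeg_strict:
  fixes \<alpha> \<gamma> :: "'n::finite \<Rightarrow> nat"
  assumes "mdeg \<gamma> \<le> mdeg \<alpha>" "\<gamma> \<noteq> \<alpha>"
  shows "\<exists>j. \<gamma> j < \<alpha> j"
proof (rule ccontr)
  assume "\<not> ?thesis"
  then have le: "\<forall>j. \<alpha> j \<le> \<gamma> j" by (simp add: not_less)
  from assms(2) obtain k where "\<alpha> k \<noteq> \<gamma> k" by (metis ext)
  with le have "\<alpha> k < \<gamma> k" using le_neq_implies_less by blast
  then have "mdeg \<alpha> < mdeg \<gamma>" unfolding mdeg_def
    by (intro sum_strict_mono_ex1) (use le in auto)
  with assms(1) show False by simp
qed

lemma minimality:
  fixes A :: "('n::finite \<Rightarrow> nat) set"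
  assumes "mdr_uis_set A N"
  shows "Astar N \<subseteq> A"
proof
  fix \<alpha> :: "'n \<Rightarrow> nat"
  assume "\<alpha> \<in> Astar N"
  then obtain j B where j: "j \<in> {1..N}" and B: "lower_set B" "finite B" "card B = j" and aB: "\<alpha> \<in> B"
    unfolding Astar_def lower_sets_card_def by blast
  define D where "D = PiE (UNIV :: 'n set) (\<lambda>j. {..\<alpha> j})"
  have DB: "D \<subseteq> B"
  proof
    fix \<beta> assume "\<beta> \<in> D"
    then have "\<beta> \<le> \<alpha>" unfolding D_def le_fun_def by auto
    with B(1) aB show "\<beta> \<in> B" unfolding lower_set_def by blast
  qed
  have cardD: "card D \<le> N" using card_mono[OF B(2) DB] B(3) j by auto
  define \<omega> :: "'n \<Rightarrow> complex" where "\<omega> j = exp (2 * of_real pi * \<i> / of_nat (Suc (\<alpha> j)))" for j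
  define P where "P \<beta> = (\<lambda>j. \<omega> j ^ \<beta> j)" for \<beta> :: "'n \<Rightarrow> nat"
  define X where "X = P ` D"
  have finD: "finite D" unfolding D_def by (simp add: finite_PiE)
  have X: "finite X" "card X \<le> N" unfolding X_def using finD cardD card_image_le[OF finD, of P] by auto
  define q :: "'n mpoly" where "q \<gamma> = (if \<gamma> = \<alpha> then 1 else 0)" for \<gamma>
  have suppq: "supp q = {\<alpha>}" unfolding supp_def q_def by auto
  have qp: "q \<in> polys" unfolding polys_def using suppq by auto
  have tq: "tdeg q = int (mdeg \<alpha>)" unfolding tdeg_def suppq by simp
  from assms X qp obtain p where pA: "p \<in> Pi_span A" and agree: "\<forall>x\<in>X. peval p x = peval q x"
    and tp: "tdeg p \<le> tdeg q"
    unfolding mdr_uis_set_def dr_uis_def by blast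
  have finp: "finite (supp p)" using pA unfolding Pi_span_def polys_def by auto
  have degp: "mdeg \<gamma> \<le> mdeg \<alpha>" if "\<gamma> \<in> supp p" for \<gamma>
  proof -
    have "int (mdeg \<gamma>) \<le> tdeg p" unfolding tdeg_def using that finp by (auto intro!: Max_ge)
    with tp tq show ?thesis by simp
  qed
  define M where "M \<gamma> = (\<Prod>j\<in>UNIV. \<Sum>b\<in>{..\<alpha> j}. \<omega> j ^ (b * (\<gamma> j + 1)))" for \<gamma> :: "'n \<Rightarrow> nat"
  have M0: "M \<gamma> = 0" if g1: "mdeg \<gamma> \<le> mdeg \<alpha>" and g2: "\<gamma> \<noteq> \<alpha>" for \<gamma>
  proof -
    obtain k where k: "\<gamma> k < \<alpha> k" using mdeg_strict[OF g1 g2] by blast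
    have "(\<Sum>b\<in>{..\<alpha> k}. \<omega> k ^ (b * (\<gamma> k + 1))) = 0"
      unfolding \<omega>_def using rou_sum[of "\<gamma> k" "\<alpha> k"] k by simp
    then show ?thesis unfolding M_def by (intro prod_zero) auto
  qed
  have Ma: "M \<alpha> \<noteq> 0"
  proof -
    have "\<And>k. (\<Sum>b\<in>{..\<alpha> k}. \<omega> k ^ (b * (\<alpha> k + 1))) = of_nat (Suc (\<alpha> k))"
      unfolding \<omega>_def using rou_sum by simp
    then show ?thesis unfolding M_def by (simp del: of_nat_Suc)
  qed
  have L: "(\<Sum>\<beta>\<in>D. (\<Prod>j\<in>UNIV. \<omega> j ^ \<beta> j) * peval r (P \<beta>)) = r \<alpha> * M \<alpha>"
    if "finite (supp r)" "\<And>\<gamma>. \<gamma> \<in> supp r \<Longrightarrow> mdeg \<gamma> \<le> mdeg \<alpha>" for r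
  proof -
    have "(\<Sum>\<beta>\<in>D. (\<Prod>j\<in>UNIV. \<omega> j ^ \<beta> j) * peval r (P \<beta>)) = (\<Sum>\<gamma>\<in>supp r. r \<gamma> * M \<gamma>)"
      unfolding D_def P_def M_def using sum_over_D[OF that(1)] .
    also have "\<dots> = (\<Sum>\<gamma>\<in>supp r. if \<gamma> = \<alpha> then r \<alpha> * M \<alpha> else 0)"
      by (intro sum.cong refl) (use M0 that(2) in auto)
    also have "\<dots> = r \<alpha> * M \<alpha>" using that(1) by (simp add: supp_def)
    finally show ?thesis .
  qed
  have "(\<Sum>\<beta>\<in>D. (\<Prod>j\<in>UNIV. \<omega> j ^ \<beta> j) * peval p (P \<beta>))
      = (\<Sum>\<beta>\<in>D. (\<Prod>j\<in>UNIV. \<omega> j ^ \<beta> j) * peval q (P \<beta>))"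
    using agree unfolding X_def by (intro sum.cong refl) auto
  then have "p \<alpha> * M \<alpha> = q \<alpha> * M \<alpha>"
    using L[OF finp degp] L[of q] suppq by simp
  then have "p \<alpha> = 1" using Ma by (simp add: q_def)
  then have "\<alpha> \<in> supp p" by (simp add: supp_def)
  then show "\<alpha> \<in> A" using pA unfolding Pi_span_def by auto
qed

section \<open>Term order\<close>

definition enc :: "'n::finite \<Rightarrow> nat" where "enc = (SOME f. inj f)"

lemma inj_enc: "inj (enc :: 'n::finite \<Rightarrow> nat)"
proof -
  obtain f :: "'n \<Rightarrow> nat" and n where "inj_on f UNIV"
    using finite_imp_inj_to_nat_seg[of "UNIV :: 'n set"] by auto
  then show ?thesis unfolding enc_def by (rule someI[where P=inj])
qed

definition lexless :: "('n::finite \<Rightarrow> nat) \<Rightarrow> ('n \<Rightarrow> nat) \<Rightarrow> bool" where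
  "lexless a b \<longleftrightarrow> (\<exists>k. a k < b k \<and> (\<forall>j. enc j < enc k \<longrightarrow> a j = b j))"

definition prec :: "('n::finite \<Rightarrow> nat) \<Rightarrow> ('n \<Rightarrow> nat) \<Rightarrow> bool" where
  "prec a b \<longleftrightarrow> mdeg a < mdeg b \<or> (mdeg a = mdeg b \<and> lexless a b)"

lemma lexless_irrefl: "\<not> lexless a a"
  unfolding lexless_def by auto

lemma lexless_trans:
  assumes "lexless a b" "lexless b c" shows "lexless a c"
proof -
  from assms obtain k1 k2 where k1: "a k1 < b k1" "\<forall>j. enc j < enc k1 \<longrightarrow> a j = b j"
    and k2: "b k2 < c k2" "\<forall>j. enc j < enc k2 \<longrightarrow> b j = c j"
    unfolding lexless_def by blast
  have "enc k1 < enc k2 \<or> enc k2 < enc k1 \<or> k1 = k2"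
  proof (cases "k1 = k2")
    case False
    then have "enc k1 \<noteq> enc k2" using inj_enc by (auto dest: injD)
    then show ?thesis by linarith
  qed simp
  then consider "enc k1 < enc k2" | "enc k2 < enc k1" | "k1 = k2" by blast
  then show ?thesis
  proof cases
    case 1
    then show ?thesis unfolding lexless_def using k1 k2
      by (intro exI[of _ k1]) force
  next
    case 2
    then show ?thesis unfolding lexless_def using k1 k2
      by (intro exI[of _ k2]) force
  next
    case 3
    then show ?thesis unfolding lexless_def using k1 k2
      by (intro exI[of _ k1]) auto
  qed
qed

lemma lexless_total:
  fixes a b :: "'n::finite \<Rightarrow> nat"
  assumes "a \<noteq> b" shows "lexless a b \<or> lexless b a"
proof -
  define D where "D = {j. a j \<noteq> b j}"
  have "D \<noteq> {}"
  proof
    assume "D = {}"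
    then have "\<forall>j. a j = b j" unfolding D_def by auto
    then show False using assms by (auto simp: fun_eq_iff)
  qed
  have "finite (enc ` D)" by simp
  then have "Min (enc ` D) \<in> enc ` D" using \<open>D \<noteq> {}\<close> by (intro Min_in) auto
  then obtain k where k: "k \<in> D" "enc k = Min (enc ` D)" by auto
  have eq: "a j = b j" if "enc j < enc k" for j
  proof (rule ccontr)
    assume "a j \<noteq> b j"
    then have "j \<in> D" unfolding D_def by auto
    then have "enc k \<le> enc j" using k by simp
    with that show False by simp
  qed
  from k(1) have "a k < b k \<or> b k < a k" unfolding D_def by auto
  moreover have "lexless a b" if "a k < b k" using that eq unfolding lexless_def by blast
  moreover have "lexless b a" if "b k < a k" using that eq unfolding lexless_def by force
  ultimately show ?thesis by blast
qed

lemma prec_irrefl: "\<not> prec a a"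
  unfolding prec_def using lexless_irrefl by auto

lemma prec_trans: "prec a b \<Longrightarrow> prec b c \<Longrightarrow> prec a c"
  unfolding prec_def using lexless_trans[of a b c] by auto

lemma prec_total: "a \<noteq> b \<Longrightarrow> prec a b \<or> prec b a"
  unfolding prec_def using lexless_total[of a b] by (cases "mdeg a" "mdeg b" rule: linorder_cases) auto

lemma prec_mdeg: "prec a b \<Longrightarrow> mdeg a \<le> mdeg b"
  unfolding prec_def by auto

lemma mdeg_add: "mdeg (\<lambda>j. a j + d j) = mdeg a + mdeg d"
  unfolding mdeg_def by (simp add: sum.distrib)

lemma prec_add: "prec a b \<Longrightarrow> prec (\<lambda>j. a j + d j) (\<lambda>j. b j + d j)"
  unfolding prec_def lexless_def mdeg_add by auto

lemma finite_mdeg_le: "finite {b :: 'n::finite \<Rightarrow> nat. mdeg b \<le> n}"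
proof -
  have sub: "{b :: 'n \<Rightarrow> nat. mdeg b \<le> n} \<subseteq> PiE UNIV (\<lambda>_. {..n})"
  proof
    fix b :: "'n \<Rightarrow> nat" assume "b \<in> {b. mdeg b \<le> n}"
    then have bn: "mdeg b \<le> n" by simp
    have "b j \<le> mdeg b" for j unfolding mdeg_def by (rule member_le_sum) auto
    then have "b j \<le> n" for j using bn le_trans by blast
    then show "b \<in> PiE UNIV (\<lambda>_. {..n})" by (simp add: PiE_iff)
  qed
  have "finite (PiE (UNIV :: 'n set) (\<lambda>_. {..n}))" by (rule finite_PiE) auto
  then show ?thesis using sub finite_subset by blast
qed

lemma wf_prec: "wf {(a :: 'n::finite \<Rightarrow> nat, b). prec a b}"
proof (rule wf_finite_segments)
  show "irrefl {(a :: 'n::finite \<Rightarrow> nat, b). prec a b}" unfolding irrefl_def using prec_irrefl by auto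
  show "trans {(a :: 'n::finite \<Rightarrow> nat, b). prec a b}" unfolding trans_def using prec_trans by blast
  fix x :: "'n \<Rightarrow> nat"
  show "finite {y. (y, x) \<in> {(a, b). prec a b}}"
    by (rule finite_subset[OF _ finite_mdeg_le[of "mdeg x"]]) (auto dest: prec_mdeg)
qed

lemma prec_max:
  fixes F :: "('n::finite \<Rightarrow> nat) set"
  assumes "finite F" "F \<noteq> {}"
  shows "\<exists>m\<in>F. \<forall>b\<in>F. b \<noteq> m \<longrightarrow> prec b m"
  using assms
proof (induction F rule: finite_ne_induct)
  case (singleton x) then show ?case by auto
next
  case (insert x F)
  then obtain m where m: "m \<in> F" "\<forall>b\<in>F. b \<noteq> m \<longrightarrow> prec b m" by blast
  show ?case
  proof (cases "prec x m")
    case True then show ?thesis using m by auto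
  next
    case False
    then have "x = m \<or> prec m x" using prec_total by blast
    moreover have "x \<noteq> m" using insert.hyps m(1) by auto
    ultimately have "prec m x" by auto
    then have "\<forall>b\<in>insert x F. b \<noteq> x \<longrightarrow> prec b x" using m prec_trans by (metis insertE)
    then show ?thesis by blast
  qed
qed

section \<open>Function space\<close>

definition sc :: "complex \<Rightarrow> ('a \<Rightarrow> complex) \<Rightarrow> ('a \<Rightarrow> complex)" where
  "sc c f = (\<lambda>x. c * f x)"

interpretation fvs: vector_space sc
  by unfold_locales (auto simp: sc_def fun_eq_iff algebra_simps)

lemma fsum_apply: "(\<Sum>x\<in>A. f x) y = (\<Sum>x\<in>A. (f x y :: complex))"
  by (induction A rule: infinite_finite_induct) auto

definition fX :: "('n \<Rightarrow> complex) set \<Rightarrow> ('n::finite \<Rightarrow> nat) \<Rightarrow> ('n \<Rightarrow> complex) \<Rightarrow> complex" where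
  "fX X a = (\<lambda>x. if x \<in> X then mon a x else 0)"

definition Bset :: "('n \<Rightarrow> complex) set \<Rightarrow> ('n::finite \<Rightarrow> nat) set" where
  "Bset X = {a. fX X a \<notin> fvs.span (fX X ` {b. prec b a})}"

lemma mult_span:
  assumes "f \<in> fvs.span S"
  shows "(\<lambda>x. m x * f x) \<in> fvs.span ((\<lambda>g x. m x * g x) ` S)"
  using assms
proof (induction rule: fvs.span_induct_alt)
  case base
  have "(\<lambda>x. m x * (0 :: 'a \<Rightarrow> complex) x) = 0" by (simp add: fun_eq_iff)
  then show ?case using fvs.span_zero by simp
next
  case (step c x y)
  have "(\<lambda>z. m z * (sc c x + y) z) = sc c (\<lambda>z. m z * x z) + (\<lambda>z. m z * y z)"
    by (simp add: fun_eq_iff sc_def algebra_simps)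
  moreover have "(\<lambda>z. m z * x z) \<in> fvs.span ((\<lambda>g x. m x * g x) ` S)"
    using step(1) by (intro fvs.span_base) auto
  ultimately show ?case using step(2) by (simp add: fvs.span_add fvs.span_scale)
qed

lemma fX_mult: "(\<lambda>x. mon d x * fX X a x) = fX X (\<lambda>j. a j + d j)"
  by (auto simp: fun_eq_iff fX_def mon_def power_add prod.distrib mult.commute)

lemma B_lower: "lower_set (Bset X)"
  unfolding lower_set_def
proof (intro ballI allI impI)
  fix \<alpha> \<beta>
  assume aB: "\<alpha> \<in> Bset X" and le: "\<beta> \<le> \<alpha>"
  show "\<beta> \<in> Bset X"
  proof (rule ccontr)
    assume "\<beta> \<notin> Bset X"
    then have sp: "fX X \<beta> \<in> fvs.span (fX X ` {b. prec b \<beta>})" unfolding Bset_def by auto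
    define \<delta> where "\<delta> j = \<alpha> j - \<beta> j" for j
    have a_eq: "\<alpha> = (\<lambda>j. \<beta> j + \<delta> j)" using le unfolding \<delta>_def le_fun_def by (auto simp: fun_eq_iff)
    have h1: "(\<lambda>x. mon \<delta> x * fX X \<beta> x) \<in> fvs.span ((\<lambda>g x. mon \<delta> x * g x) ` fX X ` {b. prec b \<beta>})"
      by (rule mult_span[OF sp])
    have h2: "(\<lambda>g x. mon \<delta> x * g x) ` fX X ` {b. prec b \<beta>} = fX X ` ((\<lambda>\<gamma> j. \<gamma> j + \<delta> j) ` {b. prec b \<beta>})"
      by (simp add: image_image fX_mult)
    have h3: "fX X ` ((\<lambda>\<gamma> j. \<gamma> j + \<delta> j) ` {b. prec b \<beta>}) \<subseteq> fX X ` {b. prec b \<alpha>}"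
      using prec_add[of _ \<beta> \<delta>] a_eq by auto
    have "(\<lambda>x. mon \<delta> x * fX X \<beta> x) = fX X \<alpha>" using fX_mult a_eq by simp
    then have "fX X \<alpha> \<in> fvs.span (fX X ` {b. prec b \<alpha>})" using h1 h2 fvs.span_mono[OF h3] by auto
    with aB show False unfolding Bset_def by auto
  qed
qed

lemma reduce: "fX X a \<in> fvs.span (fX X ` (Bset X \<inter> {b. b = a \<or> prec b a}))"
  using wf_prec
proof (induction a rule: wf_induct_rule)
  case (less a)
  show ?case
  proof (cases "a \<in> Bset X")
    case True
    then show ?thesis by (intro fvs.span_base) auto
  next
    case False
    then have sp: "fX X a \<in> fvs.span (fX X ` {b. prec b a})" unfolding Bset_def by auto
    have "fX X ` {b. prec b a} \<subseteq> fvs.span (fX X ` (Bset X \<inter> {b. b = a \<or> prec b a}))"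
    proof
      fix v assume "v \<in> fX X ` {b. prec b a}"
      then obtain c where c: "prec c a" "v = fX X c" by auto
      have "fX X c \<in> fvs.span (fX X ` (Bset X \<inter> {b. b = c \<or> prec b c}))" using less c by auto
      also have "\<dots> \<subseteq> fvs.span (fX X ` (Bset X \<inter> {b. b = a \<or> prec b a}))"
        using c(1) prec_trans by (intro fvs.span_mono image_mono) blast
      finally show "v \<in> fvs.span (fX X ` (Bset X \<inter> {b. b = a \<or> prec b a}))" using c by simp
    qed
    then have "fvs.span (fX X ` {b. prec b a}) \<subseteq> fvs.span (fX X ` (Bset X \<inter> {b. b = a \<or> prec b a}))"
      by (intro fvs.span_minimal) auto
    with sp show ?thesis by auto
  qed
qed

lemma indep:
  assumes "finite F" "F \<subseteq> Bset X"
  shows "fvs.independent (fX X ` F)"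
  using assms
proof (induction "card F" arbitrary: F rule: less_induct)
  case less
  show ?case
  proof (cases "F = {}")
    case True then show ?thesis by (simp add: fvs.independent_empty)
  next
    case False
    obtain m where m: "m \<in> F" "\<forall>b\<in>F. b \<noteq> m \<longrightarrow> prec b m" using prec_max[OF less.prems(1) False] by blast
    define F' where "F' = F - {m}"
    have "card F' < card F" unfolding F'_def using m(1) less.prems(1) by (rule_tac card_Diff1_less) auto
    then have ind: "fvs.independent (fX X ` F')" using less F'_def by auto
    have img: "fX X ` F = insert (fX X m) (fX X ` F')" unfolding F'_def using m(1) by auto
    have "fvs.span (fX X ` F') \<subseteq> fvs.span (fX X ` {b. prec b m})"
      using m unfolding F'_def by (intro fvs.span_mono image_mono) auto
    moreover have "fX X m \<notin> fvs.span (fX X ` {b. prec b m})" using m(1) less.prems(2) unfolding Bset_def by auto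
    ultimately have "fX X m \<notin> fvs.span (fX X ` F')" by auto
    then show ?thesis unfolding img using ind by (rule fvs.independent_insertI)
  qed
qed

lemma inj_B: "inj_on (fX X) (Bset X)"
proof (rule inj_onI, rule ccontr)
  fix a b assume a: "a \<in> Bset X" and b: "b \<in> Bset X" and eq: "fX X a = fX X b" and ne: "a \<noteq> b"
  from prec_total[OF ne] show False
  proof
    assume "prec a b"
    then have "fX X b \<in> fvs.span (fX X ` {c. prec c b})" using eq by (intro fvs.span_base) (metis (mono_tags) image_eqI mem_Collect_eq)
    with b show False unfolding Bset_def by auto
  next
    assume "prec b a"
    then have "fX X a \<in> fvs.span (fX X ` {c. prec c a})" using eq by (intro fvs.span_base) (metis (mono_tags) image_eqI mem_Collect_eq)
    with a show False unfolding Bset_def by auto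
  qed
qed

definition dl :: "'a \<Rightarrow> 'a \<Rightarrow> complex" where "dl x = (\<lambda>y. if y = x then 1 else 0)"

lemma fX_span_delta:
  assumes "finite X"
  shows "fX X a \<in> fvs.span (dl ` X)"
proof -
  have "fX X a = (\<Sum>x\<in>X. sc (mon a x) (dl x))"
  proof
    fix y
    have "(\<Sum>x\<in>X. sc (mon a x) (dl x)) y = (\<Sum>x\<in>X. if x = y then mon a y else 0)"
      unfolding fsum_apply sc_def dl_def by (intro sum.cong refl) auto
    also have "\<dots> = fX X a y" using assms unfolding fX_def by (simp add: sum.delta)
    finally show "fX X a y = (\<Sum>x\<in>X. sc (mon a x) (dl x)) y" by simp
  qed
  also have "\<dots> \<in> fvs.span (dl ` X)"
    by (intro fvs.span_sum fvs.span_scale[unfolded] fvs.span_base) auto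
  finally show ?thesis .
qed

lemma B_finite_card:
  assumes "finite X"
  shows "finite (Bset X) \<and> card (Bset X) \<le> card X"
proof -
  have bound: "card F \<le> card X" if F: "finite F" "F \<subseteq> Bset X" for F
  proof -
    have "card F = card (fX X ` F)" using inj_on_subset[OF inj_B F(2)] by (simp add: card_image)
    also have "\<dots> \<le> card (dl ` X)"
      using fvs.independent_span_bound[OF _ indep[OF F]] assms fX_span_delta[OF assms] by auto
    also have "\<dots> \<le> card X" by (rule card_image_le[OF assms])
    finally show ?thesis .
  qed
  have "finite (Bset X)"
  proof (rule ccontr)
    assume "infinite (Bset X)"
    then obtain F where "finite F" "card F = Suc (card X)" "F \<subseteq> Bset X"
      using infinite_arbitrarily_large by blast
    with bound show False by fastforce
  qed
  with bound show ?thesis by auto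
qed

lemma B_sub_Astar:
  assumes "finite X" "card X \<le> N"
  shows "Bset X \<subseteq> Astar N"
proof
  fix a assume a: "a \<in> Bset X"
  from B_finite_card[OF assms(1)] have fin: "finite (Bset X)" and c: "card (Bset X) \<le> N" using assms by auto
  have "card (Bset X) \<ge> 1" using a fin by (metis One_nat_def Suc_leI card_gt_0_iff empty_iff)
  with c have "card (Bset X) \<in> {1..N}" by auto
  moreover have "Bset X \<in> lower_sets_card (card (Bset X))"
    unfolding lower_sets_card_def using B_lower fin by auto
  ultimately show "a \<in> Astar N" unfolding Astar_def using a by blast
qed

lemma existence:
  fixes X :: "('n::finite \<Rightarrow> complex) set" and q :: "'n mpoly"
  assumes X: "finite X" "card X \<le> N" and qp: "q \<in> polys"
  shows "\<exists>p\<in>Pi_span (Astar N). (\<forall>x\<in>X. peval p x = peval q x) \<and> tdeg p \<le> tdeg q"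
proof (cases "supp q = {}")
  case True
  define p :: "'n mpoly" where "p = (\<lambda>_. 0)"
  have sp: "supp p = {}" unfolding p_def supp_def by simp
  have "p \<in> Pi_span (Astar N)" unfolding Pi_span_def polys_def using sp by simp
  moreover have "peval p x = peval q x" for x unfolding peval_def sp True by simp
  moreover have "tdeg p \<le> tdeg q" unfolding tdeg_def sp True by simp
  ultimately show ?thesis by blast
next
  case False
  have finq: "finite (supp q)" using qp unfolding polys_def by simp
  have ge: "int (mdeg \<gamma>) \<le> tdeg q" if "\<gamma> \<in> supp q" for \<gamma>
    unfolding tdeg_def using False finq that by (auto intro!: Max_ge)
  obtain \<gamma>0 where "\<gamma>0 \<in> supp q" using False by blast
  then have tq0: "tdeg q \<ge> 0" using ge[of \<gamma>0] by linarith
  define d where "d = nat (tdeg q)"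
  have dq: "int d = tdeg q" unfolding d_def using tq0 by simp
  have degq: "mdeg \<gamma> \<le> d" if "\<gamma> \<in> supp q" for \<gamma> using ge[OF that] dq by linarith
  define Bd where "Bd = Bset X \<inter> {b. mdeg b \<le> d}"
  have finBd: "finite Bd" unfolding Bd_def using finite_mdeg_le by blast
  define g where "g = (\<Sum>\<gamma>\<in>supp q. sc (q \<gamma>) (fX X \<gamma>))"
  have "g \<in> fvs.span (fX X ` Bd)"
    unfolding g_def
  proof (intro fvs.span_sum fvs.span_scale)
    fix \<gamma> assume \<gamma>: "\<gamma> \<in> supp q"
    have "Bset X \<inter> {b. b = \<gamma> \<or> prec b \<gamma>} \<subseteq> Bd"
      unfolding Bd_def using degq[OF \<gamma>] prec_mdeg by fastforce
    then show "fX X \<gamma> \<in> fvs.span (fX X ` Bd)"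
      using reduce[of X \<gamma>] fvs.span_mono[OF image_mono] by blast
  qed
  then obtain u where u: "g = (\<Sum>v\<in>fX X ` Bd. sc (u v) v)"
    using fvs.span_finite[OF finite_imageI[OF finBd]] by auto
  have injBd: "inj_on (fX X) Bd" using inj_on_subset[OF inj_B] unfolding Bd_def by blast
  have u2: "g = (\<Sum>b\<in>Bd. sc (u (fX X b)) (fX X b))"
    unfolding u by (simp add: sum.reindex[OF injBd])
  define p :: "'n mpoly" where "p b = (if b \<in> Bd then u (fX X b) else 0)" for b
  have suppp: "supp p \<subseteq> Bd" unfolding p_def supp_def by auto
  have "p \<in> Pi_span (Astar N)"
    unfolding Pi_span_def polys_def using suppp finBd B_sub_Astar[OF X] finite_subset
    unfolding Bd_def by blast
  moreover have "peval p x = peval q x" if x: "x \<in> X" for x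
  proof -
    have "peval q x = g x"
      unfolding g_def fsum_apply peval_superset[OF finq subset_refl] sc_def fX_def using x by simp
    also have "\<dots> = (\<Sum>b\<in>Bd. p b * mon b x)"
      unfolding u2 fsum_apply sc_def fX_def p_def using x by simp
    also have "\<dots> = peval p x" using peval_superset[OF finBd suppp] by simp
    finally show ?thesis by simp
  qed
  moreover have "tdeg p \<le> tdeg q"
  proof (cases "supp p = {}")
    case True then show ?thesis unfolding tdeg_def[of p] using tq0 by simp
  next
    case False
    have "finite (supp p)" using finBd suppp finite_subset by blast
    moreover have "int (mdeg b) \<le> int d" if "b \<in> supp p" for b using that suppp unfolding Bd_def by auto
    ultimately have "Max ((\<lambda>\<alpha>. int (mdeg \<alpha>)) ` supp p) \<le> int d" using False by (subst Max_le_iff) auto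
    then show ?thesis unfolding tdeg_def[of p] using False dq by simp
  qed
  ultimately show ?thesis by blast
qed

theorem corollary20:
  fixes N :: nat
  assumes "N \<ge> 1"
  shows "mdr_uis_set (Astar N :: ('n::finite \<Rightarrow> nat) set) N
     \<and> (\<forall>A :: ('n \<Rightarrow> nat) set. mdr_uis_set A N \<longrightarrow> Astar N \<subseteq> A)
     \<and> (\<forall>A :: ('n \<Rightarrow> nat) set. A \<subset> Astar N \<longrightarrow> \<not> mdr_uis_set A N)"
proof -
  have 1: "mdr_uis_set (Astar N :: ('n::finite \<Rightarrow> nat) set) N"
    unfolding mdr_uis_set_def dr_uis_def
  proof (intro conjI allI impI ballI)
    show "Pi_span (Astar N) \<subseteq> polys" unfolding Pi_span_def by auto
  next
    fix X :: "('n \<Rightarrow> complex) set" and q :: "'n mpoly" assume "finite X \<and> card X \<le> N" "q \<in> polys"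
    then show "\<exists>p\<in>Pi_span (Astar N). (\<forall>x\<in>X. peval p x = peval q x) \<and> tdeg p \<le> tdeg q"
      using existence by blast
  qed
  have 2: "\<forall>A :: ('n \<Rightarrow> nat) set. mdr_uis_set A N \<longrightarrow> Astar N \<subseteq> A"
    using minimality by blast
  have 3: "\<forall>A :: ('n \<Rightarrow> nat) set. A \<subset> Astar N \<longrightarrow> \<not> mdr_uis_set A N"
    using 2 by blast
  show ?thesis using 1 2 3 by blast
qed

end
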